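(* Let $\pi$ be a propositional formula and $\varphi$ an arbitrary formula. Then (1) the formula $\lnot\Box\pi\to(\varphi\leftrightarrow[\dagger'\pi]\varphi)$ is valid (true at every world of every model); but (2) the formula $\lnot\Box\pi\to(\varphi\leftrightarrow[\dagger\pi]\varphi)$ is not necessarily valid, i.e. there exist a propositional $\pi$ and a formula $\varphi$ for which it is not valid.
   Context: Fix a countable non-empty set $\mathit{At}$ of atoms. Formulas are built from $\top$, atoms, $\lnot$, $\land$, $\Box$ and, for each propositional $\pi$, operators $[\dagger\pi]$ and $[\dagger'\pi]$. A model is $\mathcal{M}=\langle W,R,V\rangle$, $W\neq\varnothing$, $R\subseteq W\times W$ arbitrary, $V:\mathit{At}\to\mathcal{P}(W)$, with standard Kripke semantics for $\Box$. A literal is an atom or its negation; a clause is a finite set $D$ of literals read as $\bigvee D$ ($\bigvee\varnothing:=\bot$), tautological if it contains $p$ and $\lnot p$ for some $p$. For propositional $\pi$, $\mathcal{C}(\pi)$ is the set of non-tautological clauses $D$ with $\models\pi\to\bigvee D$ and no $D'\subsetneq D$ with $\models\pi\to\bigvee D'$. For a model $\mathcal{M}$ and a non-tautological clause $D$, $\mathcal{M}^{(D)}_u=\langle W',R',V'\rangle$ has $W'=W\times\{0,1\}$, $(w,i)R'(v,j)$ iff $wRv$, $(w,0)\in V'(p)$ iff $w\in V(p)$, and $(w,1)\in V'(p)$ iff $\lnot p\in D$, or $\{p,\lnot p\}\cap D=\varnothing$ and $w\in V(p)$. Semantics: $\mathcal{M},w\models[\dagger\pi]\varphi$ iff for all $D\in\mathcal{C}(\pi)$,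 $\mathcal{M}^{(D)}_u,(w,0)\models\varphi$. Conditional forgetting: $\mathcal{M},w\models[\dagger'\pi]\varphi$ iff either $\mathcal{M},w\models\Box\pi$ and for all $D\in\mathcal{C}(\pi)$, $\mathcal{M}^{(D)}_u,(w,0)\models\varphi$; or $\mathcal{M},w\not\models\Box\pi$ and $\mathcal{M},w\models\varphi$. *)

theory Defs
  imports "HOL-Library.Countable"
begin

datatype 'p pf = PTop | PAtom 'p | PNot "'p pf" | PAnd "'p pf" "'p pf"

primrec peval :: "('p \<Rightarrow> bool) \<Rightarrow> 'p pf \<Rightarrow> bool" where
  "peval v PTop = True"
| "peval v (PAtom p) = v p"
| "peval v (PNot a) = (\<not> peval v a)"
| "peval v (PAnd a b) = (peval v a \<and> peval v b)"

datatype 'p fm = Top | Atom 'p | Not "'p fm" | And "'p fm" "'p fm" | Box "'p fm"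
  | Forget "'p pf" "'p fm"
  | CForget "'p pf" "'p fm"

primrec emb :: "'p pf \<Rightarrow> 'p fm" where
  "emb PTop = Top"
| "emb (PAtom p) = Atom p"
| "emb (PNot a) = Not (emb a)"
| "emb (PAnd a b) = And (emb a) (emb b)"

definition Or :: "'p fm \<Rightarrow> 'p fm \<Rightarrow> 'p fm" where
  "Or a b = Not (And (Not a) (Not b))"
definition Imp :: "'p fm \<Rightarrow> 'p fm \<Rightarrow> 'p fm" where
  "Imp a b = Not (And a (Not b))"
definition Iff :: "'p fm \<Rightarrow> 'p fm \<Rightarrow> 'p fm" where
  "Iff a b = And (Imp a b) (Imp b a)"

datatype 'p lit = Pos 'p | Neg 'p

primrec lit_true :: "('p \<Rightarrow> bool) \<Rightarrow> 'p lit \<Rightarrow> bool" where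
  "lit_true v (Pos p) = v p"
| "lit_true v (Neg p) = (\<not> v p)"

definition tautological :: "'p lit set \<Rightarrow> bool" where
  "tautological D \<longleftrightarrow> (\<exists>p. Pos p \<in> D \<and> Neg p \<in> D)"

definition entails_clause :: "'p pf \<Rightarrow> 'p lit set \<Rightarrow> bool" where
  "entails_clause \<pi> D \<longleftrightarrow> (\<forall>v. peval v \<pi> \<longrightarrow> (\<exists>l\<in>D. lit_true v l))"

definition clauses :: "'p pf \<Rightarrow> 'p lit set set" where
  "clauses \<pi> = {D. finite D \<and> \<not> tautological D \<and> entails_clause \<pi> D
                  \<and> \<not> (\<exists>D'. D' \<subset> D \<and> entails_clause \<pi> D')}"

type_synonym ('w, 'p) model = "'w set \<times> ('w \<times> 'w) set \<times> ('p \<Rightarrow> 'w set)"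

definition wf_model :: "('w, 'p) model \<Rightarrow> bool" where
  "wf_model M \<longleftrightarrow> (case M of (W, R, V) \<Rightarrow>
      W \<noteq> {} \<and> R \<subseteq> W \<times> W \<and> (\<forall>p. V p \<subseteq> W))"

(* The update M^(D)_u changes the world type (W x {0,1}).  To allow nested
   updates in one recursive semantics, worlds are represented as pairs
   (w, bs) with a bit list bs; W x {0,1} is encoded by prepending a bit
   (False = 0, True = 1). *)
definition ext :: "bool \<Rightarrow> 'w \<times> bool list \<Rightarrow> 'w \<times> bool list" where
  "ext b x = (fst x, b # snd x)"

definition upd :: "'p lit set \<Rightarrow> ('w \<times> bool list, 'p) model \<Rightarrow> ('w \<times> bool list, 'p) model" where
  "upd D M = (case M of (W, R, V) \<Rightarrow>
     ({ext b x | b x. x \<in> W},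
      {(ext b x, ext c y) | b c x y. (x, y) \<in> R},
      (\<lambda>p. {ext False x | x. x \<in> V p}
         \<union> {ext True x | x. x \<in> W \<and> (Neg p \<in> D \<or> (Pos p \<notin> D \<and> Neg p \<notin> D \<and> x \<in> V p))})))"

primrec sat :: "('w \<times> bool list, 'p) model \<Rightarrow> 'w \<times> bool list \<Rightarrow> 'p fm \<Rightarrow> bool" where
  "sat M x Top = True"
| "sat M x (Atom p) = (x \<in> snd (snd M) p)"
| "sat M x (Not a) = (\<not> sat M x a)"
| "sat M x (And a b) = (sat M x a \<and> sat M x b)"
| "sat M x (Box a) = (\<forall>y. (x, y) \<in> fst (snd M) \<longrightarrow> sat M y a)"
| "sat M x (Forget \<pi> a) = (\<forall>D\<in>clauses \<pi>. sat (upd D M) (ext False x) a)"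
| "sat M x (CForget \<pi> a) =
     (if (\<forall>y. (x, y) \<in> fst (snd M) \<longrightarrow> peval (\<lambda>p. y \<in> snd (snd M) p) \<pi>)
      then (\<forall>D\<in>clauses \<pi>. sat (upd D M) (ext False x) a)
      else sat M x a)"

definition lift :: "('w, 'p) model \<Rightarrow> ('w \<times> bool list, 'p) model" where
  "lift M = (case M of (W, R, V) \<Rightarrow>
     ({(w, []) | w. w \<in> W}, {((w, []), (v, [])) | w v. (w, v) \<in> R},
      (\<lambda>p. {(w, []) | w. w \<in> V p})))"

definition holds :: "('w, 'p) model \<Rightarrow> 'w \<Rightarrow> 'p fm \<Rightarrow> bool" where
  "holds M w \<phi> = sat (lift M) (w, []) \<phi>"

end

theory Submission
  imports Defs
begin

lemma sat_emb: "sat M x (emb \<pi>) = peval (\<lambda>p. x \<in> snd (snd M) p) \<pi>"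
  by (induction \<pi>) auto

lemma clause_in: "{Pos p} \<in> clauses (PAtom p)"
proof -
  have "\<not> entails_clause (PAtom p) {}" unfolding entails_clause_def
    by (auto intro: exI[of _ "\<lambda>_. True"])
  moreover have "entails_clause (PAtom p) {Pos p}" unfolding entails_clause_def by auto
  moreover have "\<And>D'. D' \<subset> {Pos p} \<Longrightarrow> D' = {}" by auto
  ultimately show ?thesis unfolding clauses_def tautological_def by auto
qed

theorem proposition6:
  shows "(\<forall>(\<pi>::'p::countable pf) \<phi> (M::('w, 'p) model) w.
            wf_model M \<and> w \<in> fst M \<longrightarrow>
            holds M w (Imp (Not (Box (emb \<pi>))) (Iff \<phi> (CForget \<pi> \<phi>))))
       \<and> (\<exists>(\<pi>::'p pf) \<phi> (M::(nat, 'p) model) w.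
            wf_model M \<and> w \<in> fst M \<and>
            \<not> holds M w (Imp (Not (Box (emb \<pi>))) (Iff \<phi> (Forget \<pi> \<phi>))))"
proof
  show "\<forall>(\<pi>::'p::countable pf) \<phi> (M::('w, 'p) model) w.
            wf_model M \<and> w \<in> fst M \<longrightarrow>
            holds M w (Imp (Not (Box (emb \<pi>))) (Iff \<phi> (CForget \<pi> \<phi>)))"
    by (auto simp: holds_def Imp_def Iff_def sat_emb)
next
  obtain p :: 'p where True by simp
  define M :: "(nat, 'p) model" where "M = ({0,1}, {(0,0),(0,1),(1,1)}, (\<lambda>_. {1}))"
  define \<phi> :: "'p fm" where "\<phi> = Not (Box (Not (Box (Atom p))))"
  have wf: "wf_model M" unfolding M_def wf_model_def by auto
  have L: "lift M = ({(0,[]),(1,[])}, {((0,[]),(0,[])),((0,[]),(1,[])),((1,[]),(1,[]))},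
             (\<lambda>_. {(1,[])}))"
    unfolding lift_def M_def by auto
  have A: "\<not> sat (lift M) (0,[]) (Box (emb (PAtom p)))"
    by (simp add: L)
  have B: "sat (lift M) (0,[]) \<phi>"
    by (simp add: L \<phi>_def)
  let ?U = "upd {Pos p} (lift M)"
  have R: "\<And>y. ((0::nat,[False]), y) \<in> fst (snd ?U) \<Longrightarrow> y = (0,[False]) \<or> y = (0,[True]) \<or> y = (1,[False]) \<or> y = (1,[True])"
    by (auto simp: L upd_def ext_def)
  have R1: "\<And>b c. ((1::nat,[b]), (1,[c])) \<in> fst (snd ?U)"
    by (simp add: L upd_def ext_def)
  have R0: "\<And>b c. ((0::nat,[b]), (0,[c])) \<in> fst (snd ?U)"
    by (simp add: L upd_def ext_def)
  have V1: "(1::nat,[True]) \<notin> snd (snd ?U) p"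
    by (simp add: L upd_def ext_def)
  have V0: "(0::nat,[False]) \<notin> snd (snd ?U) p"
    by (simp add: L upd_def ext_def)
  have C: "\<not> sat ?U (ext False (0,[])) \<phi>"
  proof -
    have "\<not> sat ?U y (Box (Atom p))" if "((0,[False]), y) \<in> fst (snd ?U)" for y
    proof -
      have "(y = (0,[False]) \<or> y = (0,[True])) \<or> (y = (1,[False]) \<or> y = (1,[True]))" using R[OF that] by blast
      then show ?thesis
      proof
        assume "y = (0,[False]) \<or> y = (0,[True])"
        then obtain b where y: "y = (0,[b])" by blast
        show ?thesis unfolding y sat.simps using R0[of b False] V0 by blast
      next
        assume "y = (1,[False]) \<or> y = (1,[True])"
        then obtain b where y: "y = (1,[b])" by blast
        show ?thesis unfolding y sat.simps using R1[of b True] V1 by blast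
      qed
    qed
    then show ?thesis by (simp add: \<phi>_def ext_def del: upd_def)
  qed
  have "\<not> holds M 0 (Imp (Not (Box (emb (PAtom p)))) (Iff \<phi> (Forget (PAtom p) \<phi>)))"
    unfolding holds_def Imp_def Iff_def using A B C clause_in[of p] by auto
  moreover have "(0::nat) \<in> fst M" by (simp add: M_def)
  ultimately show "\<exists>(\<pi>::'p pf) \<phi> (M::(nat, 'p) model) w.
            wf_model M \<and> w \<in> fst M \<and>
            \<not> holds M w (Imp (Not (Box (emb \<pi>))) (Iff \<phi> (Forget \<pi> \<phi>)))"
    using wf by blast
qed

end
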